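(* Let $V$ be a real $(n+1)$-dimensional vector space, $\mathcal{T}\subset V\setminus\{0\}$ a convex conic domain, and $F:\mathcal{T}\to(0,\infty)$ a smooth, positively $1$-homogeneous function such that for every $v\in\mathcal{T}$ the fundamental tensor $g_v$ has exactly one positive eigenvalue. Then for all $v,w\in\mathcal{T}$, $$F(v)+F(w)\le 2\int_0^1 F(tv+(1-t)w)\,dt\le F(v+w).$$
   Context: A conic domain of $V$ is an open connected subset $\mathcal{Q}\subset V\setminus\{0\}$ such that $\lambda v\in\mathcal{Q}$ for all $v\in\mathcal{Q}$, $\lambda>0$. Positively 1-homogeneous: $F(\lambda v)=\lambda F(v)$ for all $\lambda>0$. The fundamental tensor at $v$ is $g_v(u,w)=\frac12\frac{\partial^2}{\partial t\,\partial s}F^2(v+tu+sw)\big|_{t=s=0}$. *)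

theory Defs
  imports "HOL-Analysis.Analysis"
begin

definition conic_domain :: "'a::real_normed_vector set \<Rightarrow> bool" where
  "conic_domain Q \<longleftrightarrow> open Q \<and> connected Q \<and> Q \<noteq> {} \<and> 0 \<notin> Q \<and>
     (\<forall>v\<in>Q. \<forall>c::real. c > 0 \<longrightarrow> c *\<^sub>R v \<in> Q)"

definition dir_deriv :: "('a::real_normed_vector \<Rightarrow> real) \<Rightarrow> 'a \<Rightarrow> 'a \<Rightarrow> real" where
  "dir_deriv f u x = deriv (\<lambda>t. f (x + t *\<^sub>R u)) 0"

fun iter_dir_deriv :: "'a::real_normed_vector list \<Rightarrow> ('a \<Rightarrow> real) \<Rightarrow> 'a \<Rightarrow> real" where
  "iter_dir_deriv [] f = f"
| "iter_dir_deriv (u # us) f = dir_deriv (iter_dir_deriv us f) u"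

text \<open>Smooth (C-infinity) on an open set: all iterated directional derivatives of all
  orders exist and are continuous on S (equivalent to C-infinity in finite dimension).\<close>
definition smooth_on :: "'a::real_normed_vector set \<Rightarrow> ('a \<Rightarrow> real) \<Rightarrow> bool" where
  "smooth_on S f \<longleftrightarrow>
     (\<forall>us. continuous_on S (iter_dir_deriv us f) \<and>
        (\<forall>u. \<forall>x\<in>S. ((\<lambda>t. iter_dir_deriv us f (x + t *\<^sub>R u))
                         has_real_derivative iter_dir_deriv (u # us) f x) (at 0)))"

definition pos_homogeneous :: "'a::real_vector set \<Rightarrow> ('a \<Rightarrow> real) \<Rightarrow> bool" where
  "pos_homogeneous Q F \<longleftrightarrow> (\<forall>v\<in>Q. \<forall>c::real. c > 0 \<longrightarrow> F (c *\<^sub>R v) = c * F v)"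

definition fundamental_tensor ::
  "('a::real_normed_vector \<Rightarrow> real) \<Rightarrow> 'a \<Rightarrow> 'a \<Rightarrow> 'a \<Rightarrow> real" where
  "fundamental_tensor F v u w =
     (1/2) * deriv (\<lambda>t. deriv (\<lambda>s. (F (v + t *\<^sub>R u + s *\<^sub>R w))\<^sup>2) 0) 0"

text \<open>A bilinear form B on a Euclidean space has exactly one positive eigenvalue (counted with
  multiplicity): B is represented by a linear operator A w.r.t. the inner product, and the
  span of the eigenvectors of A with positive eigenvalues is one-dimensional.\<close>
definition one_pos_eigenvalue :: "('a::euclidean_space \<Rightarrow> 'a \<Rightarrow> real) \<Rightarrow> bool" where
  "one_pos_eigenvalue B \<longleftrightarrow>
     (\<exists>A. linear A \<and> (\<forall>u w. B u w = inner (A u) w) \<and>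
          dim (span {x. \<exists>c>0. A x = c *\<^sub>R x}) = 1)"

end

theory Submission
  imports Defs
begin


lemma quad_zero:
  fixes c d :: real
  assumes "\<forall>t. 2*t*c + t^2*d \<le> 0"
  shows "c = 0"
proof -
  have h: "2*(c/(\<bar>d\<bar>+1))*c + (c/(\<bar>d\<bar>+1))^2*d \<le> 0" using assms by blast
  have p: "\<bar>d\<bar>+1 > 0" by simp
  have g: "(2*(c/k)*c + (c/k)^2*d) * k^2 = c^2*(2*k+d)" if "k > 0" for k
    using that by (simp add: field_simps power2_eq_square)
  have "(2*(c/(\<bar>d\<bar>+1))*c + (c/(\<bar>d\<bar>+1))^2*d) * (\<bar>d\<bar>+1)^2 = c^2*(2*\<bar>d\<bar>+2+d)"
    using g[OF p] by simp
  moreover have "(2*(c/(\<bar>d\<bar>+1))*c + (c/(\<bar>d\<bar>+1))^2*d) * (\<bar>d\<bar>+1)^2 \<le> 0"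
    using h by (simp add: mult_nonpos_nonneg)
  ultimately have "c^2*(2*\<bar>d\<bar>+2+d) \<le> 0" by simp
  moreover have "2*\<bar>d\<bar>+2+d > 0" by linarith
  ultimately have "c^2 \<le> 0" by (simp add: mult_le_0_iff)
  then show ?thesis by simp
qed

lemma max_eig:
  fixes A :: "'a::euclidean_space \<Rightarrow> 'a"
  assumes lin: "linear A" and sym: "\<And>u w. inner (A u) w = inner (A w) u"
    and ee: "A e = \<mu> *\<^sub>R e"
    and ne: "{y. norm y = 1 \<and> inner y e = 0} \<noteq> {}"
  shows "\<exists>y. norm y = 1 \<and> inner y e = 0 \<and> A y = (inner (A y) y) *\<^sub>R y \<and>
     (\<forall>z. norm z = 1 \<and> inner z e = 0 \<longrightarrow> inner (A z) z \<le> inner (A y) y)"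
proof -
  let ?M = "{y. norm y = 1 \<and> inner y e = 0}"
  have bl: "bounded_linear A" using lin by (simp add: linear_conv_bounded_linear)
  have cA: "continuous_on UNIV A" using bl by (simp add: linear_continuous_on)
  have cQ: "continuous_on ?M (\<lambda>y. inner (A y) y)"
    by (intro continuous_intros continuous_on_subset[OF cA]) auto
  have "closed ?M"
    by (intro closed_Collect_conj closed_Collect_eq continuous_intros) 
  moreover have "bounded ?M" by (rule boundedI[of _ 1]) auto
  ultimately have "compact ?M" by (simp add: compact_eq_bounded_closed)
  from continuous_attains_sup[OF this ne cQ] obtain y where y: "y \<in> ?M"
    and ymax: "\<forall>z\<in>?M. inner (A z) z \<le> inner (A y) y" by blast
  define l where "l = inner (A y) y"
  have Asc: "A (c *\<^sub>R x) = c *\<^sub>R A x" for c x using lin by (simp add: linear_scale)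
  have Aadd: "A (x + z) = A x + A z" for x z using lin by (simp add: linear_add)
  have key: "inner (A y) z = 0" if z: "inner z e = 0" "inner z y = 0" for z
  proof -
    have "2*t*(inner (A y) z) + t^2*(inner (A z) z - l * (norm z)^2) \<le> 0" for t
    proof -
      let ?p = "y + t *\<^sub>R z"
      have n2: "(norm ?p)^2 = 1 + t^2 * (norm z)^2"
      proof -
        have "(norm ?p)^2 = inner ?p ?p" by (simp add: power2_norm_eq_inner)
        also have "\<dots> = inner y y + t^2 * inner z z" using z by (simp add: inner_add_left inner_add_right inner_commute power2_eq_square)
        finally show ?thesis using y by (simp add: power2_norm_eq_inner[symmetric])
      qed
      hence np: "norm ?p > 0" by (smt (verit) norm_ge_zero power2_eq_square zero_le_power2 mult_nonneg_nonneg zero_less_power2)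
      have "?p /\<^sub>R norm ?p \<in> ?M"
        using np y z by (auto simp: inner_add_left)
      hence "inner (A (?p /\<^sub>R norm ?p)) (?p /\<^sub>R norm ?p) \<le> l" using ymax l_def by blast
      hence "inner (A ?p) ?p / (norm ?p)^2 \<le> l" by (simp add: Asc power2_eq_square divide_inverse mult.commute mult.left_commute)
      hence "inner (A ?p) ?p \<le> l * (norm ?p)^2" using np by (simp add: divide_le_eq)
      moreover have "inner (A ?p) ?p = l + 2*t*inner (A y) z + t^2 * inner (A z) z"
        using sym[of y z] by (simp add: Aadd Asc inner_add_left inner_add_right l_def power2_eq_square algebra_simps)
      ultimately show ?thesis using n2 by (simp add: algebra_simps)
    qed
    then show ?thesis using quad_zero by blast
  qed
  define r where "r = A y - l *\<^sub>R y"
  have ry: "inner r y = 0" using y by (simp add: r_def inner_diff_left l_def power2_norm_eq_inner[symmetric])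
  have re: "inner r e = 0" using y sym[of y e] ee by (simp add: r_def inner_diff_left inner_diff_right inner_commute)
  have "inner r r = 0"
    using key[OF re ry] ry by (simp add: r_def inner_diff_left inner_diff_right inner_commute)
  hence "r = 0" by simp
  hence "A y = l *\<^sub>R y" by (simp add: r_def)
  then show ?thesis using y ymax l_def by blast
qed

lemma neg_on_orth:
  fixes A :: "'a::euclidean_space \<Rightarrow> 'a"
  assumes lin: "linear A" and sym: "\<And>u w. inner (A u) w = inner (A w) u"
    and dimP: "dim (span {x. \<exists>c>0. A x = c *\<^sub>R x}) = 1"
    and Qx: "inner (A x) x > 0" and orth: "inner (A x) y = 0"
  shows "inner (A y) y \<le> 0"
proof (rule ccontr)
  assume "\<not> ?thesis"
  hence Qy: "inner (A y) y > 0" by simp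
  have Asc: "A (c *\<^sub>R x) = c *\<^sub>R A x" for c x using lin by (simp add: linear_scale)
  have Aadd: "A (x + z) = A x + A z" for x z using lin by (simp add: linear_add)
  have A0: "A 0 = 0" using lin by (simp add: linear_0)
  have Qscale: "inner (A (z /\<^sub>R norm z)) (z /\<^sub>R norm z) = inner (A z) z / (norm z)^2" for z
    by (simp add: Asc power2_eq_square divide_inverse mult.commute mult.left_commute)
  have Qlin: "inner (A (a *\<^sub>R x + b *\<^sub>R y)) (a *\<^sub>R x + b *\<^sub>R y) = a^2 * inner (A x) x + b^2 * inner (A y) y" for a b
    using orth sym[of x y] by (simp add: Aadd Asc inner_add_left inner_add_right power2_eq_square algebra_simps)
  have x0: "x \<noteq> 0" using Qx A0 by auto
  have ne0: "{y::'a. norm y = 1 \<and> inner y 0 = 0} \<noteq> {}" proof -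
    have "x /\<^sub>R norm x \<in> {y::'a. norm y = 1 \<and> inner y 0 = 0}" using x0 by simp
    then show ?thesis by (metis empty_iff)
  qed
  have ee0: "A 0 = 0 *\<^sub>R (0::'a)" using A0 by simp
  have "\<exists>y::'a. norm y = 1 \<and> A y = (inner (A y) y) *\<^sub>R y \<and>
     (\<forall>z. norm z = 1 \<longrightarrow> inner (A z) z \<le> inner (A y) y)"
    using max_eig[OF lin sym ee0 ne0] by simp
  then obtain e1 where e1: "norm e1 = 1"
    "A e1 = inner (A e1) e1 *\<^sub>R e1" and e1max: "\<forall>z. norm z = 1 \<longrightarrow> inner (A z) z \<le> inner (A e1) e1"
    by blast
  have "inner (A (x /\<^sub>R norm x)) (x /\<^sub>R norm x) \<le> inner (A e1) e1" using e1max[rule_format, of "x /\<^sub>R norm x"] x0 by simp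
  moreover have "inner (A x) x / (norm x)^2 > 0" using Qx x0 by simp
  ultimately have l1: "inner (A e1) e1 > 0" using Qscale[of x] by linarith
  obtain y0 where y0: "inner y0 e1 = 0" "inner (A y0) y0 > 0"
  proof (cases "inner x e1 = 0")
    case True then show ?thesis using that Qx by blast
  next
    case False
    let ?y0 = "inner y e1 *\<^sub>R x + (- inner x e1) *\<^sub>R y"
    have o1: "inner ?y0 e1 = 0" by (simp add: inner_add_left inner_diff_left)
    have a: "(inner y e1)^2 * inner (A x) x \<ge> 0" using Qx by simp
    have b: "(- inner x e1)^2 * inner (A y) y > 0" using Qy False by simp
    have "inner (A ?y0) ?y0 > 0" unfolding Qlin using a b by linarith
    then show ?thesis using that o1 by blast
  qed
  have y00: "y0 \<noteq> 0" using y0 A0 by auto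
  have "{y. norm y = 1 \<and> inner y e1 = 0} \<noteq> {}" proof -
    have "y0 /\<^sub>R norm y0 \<in> {y. norm y = 1 \<and> inner y e1 = 0}" using y00 y0 by simp
    then show ?thesis by (metis empty_iff)
  qed
  from max_eig[OF lin sym e1(2) this] obtain e2 where e2: "norm e2 = 1" "inner e2 e1 = 0"
    "A e2 = inner (A e2) e2 *\<^sub>R e2" and e2max: "\<forall>z. norm z = 1 \<and> inner z e1 = 0 \<longrightarrow> inner (A z) z \<le> inner (A e2) e2"
    by blast
  have "inner (A (y0 /\<^sub>R norm y0)) (y0 /\<^sub>R norm y0) \<le> inner (A e2) e2" using e2max[rule_format, of "y0 /\<^sub>R norm y0"] y00 y0 by simp
  moreover have "inner (A y0) y0 / (norm y0)^2 > 0" using y0 y00 by simp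
  ultimately have l2: "inner (A e2) e2 > 0" using Qscale[of y0] by linarith
  let ?P = "{x. \<exists>c>0. A x = c *\<^sub>R x}"
  have sub: "{e1, e2} \<subseteq> span ?P" using e1 e2 l1 l2 by (auto intro!: span_base)
  have ne: "e1 \<noteq> e2" using e1 e2 by (metis inner_eq_zero_iff norm_zero zero_neq_one)
  have "pairwise orthogonal {e1, e2}" using e2 by (auto simp: pairwise_def orthogonal_def inner_commute)
  moreover have "0 \<notin> {e1, e2}" using e1 e2 by auto
  ultimately have "independent {e1, e2}" by (rule pairwise_orthogonal_independent)
  from independent_card_le_dim[OF sub this] have "card {e1, e2} \<le> 1" using dimP by simp
  with ne show False by simp
qed



lemma sm_D: "smooth_on T F \<Longrightarrow> x \<in> T \<Longrightarrow>
  ((\<lambda>t. iter_dir_deriv us F (x + t *\<^sub>R u)) has_real_derivative iter_dir_deriv (u # us) F x) (at 0)"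
  unfolding smooth_on_def by blast

lemma shift_deriv:
  assumes sm: "smooth_on T F" and p: "y + s0 *\<^sub>R u \<in> T"
  shows "((\<lambda>s. iter_dir_deriv us F (y + s *\<^sub>R u)) has_real_derivative
            iter_dir_deriv (u # us) F (y + s0 *\<^sub>R u)) (at s0)"
proof -
  let ?p = "y + s0 *\<^sub>R u"
  have "((\<lambda>t. iter_dir_deriv us F (?p + t *\<^sub>R u)) has_real_derivative iter_dir_deriv (u # us) F ?p) (at (s0 + -s0))"
    using sm_D[OF sm p] by simp
  hence "((\<lambda>s. iter_dir_deriv us F (?p + (s + -s0) *\<^sub>R u)) has_real_derivative iter_dir_deriv (u # us) F ?p) (at s0)"
    by (rule DERIV_shift[THEN iffD1])
  moreover have "(\<lambda>s. iter_dir_deriv us F (?p + (s + -s0) *\<^sub>R u)) = (\<lambda>s. iter_dir_deriv us F (y + s *\<^sub>R u))"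
    by (simp add: algebra_simps)
  ultimately show ?thesis by simp
qed

lemma F_deriv0: "smooth_on T F \<Longrightarrow> x \<in> T \<Longrightarrow>
  ((\<lambda>t. F (x + t *\<^sub>R u)) has_real_derivative iter_dir_deriv [u] F x) (at 0)"
  using sm_D[of T F x "[]" u] by simp

lemma euler:
  assumes sm: "smooth_on T F" and ph: "pos_homogeneous T F" and x: "x \<in> T"
  shows "iter_dir_deriv [x] F x = F x"
proof -
  have d1: "((\<lambda>t. (1 + t) * F x) has_real_derivative F x) (at 0)"
    by (rule derivative_eq_intros | simp)+
  have "((\<lambda>t. F (x + t *\<^sub>R x)) has_real_derivative F x) (at 0)"
  proof (rule has_field_derivative_transform_within_open[OF d1, of "{t. t > -1}"])
    show "open {t::real. t > -1}" by (simp add: open_Collect_less)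
    show "0 \<in> {t::real. t > -1}" by simp
    fix t :: real assume "t \<in> {t. t > -1}"
    hence "1 + t > 0" by simp
    moreover have "x + t *\<^sub>R x = (1 + t) *\<^sub>R x" by (simp add: algebra_simps)
    ultimately show "(1 + t) * F x = F (x + t *\<^sub>R x)" using ph x by (simp add: pos_homogeneous_def)
  qed
  from DERIV_unique[OF F_deriv0[OF sm x] this] show ?thesis .
qed

lemma hom0:
  assumes sm: "smooth_on T F" and ph: "pos_homogeneous T F" and cd: "conic_domain T"
    and x: "x \<in> T" and c: "c > 0"
  shows "iter_dir_deriv [w] F (c *\<^sub>R x) = iter_dir_deriv [w] F x"
proof -
  have cx: "c *\<^sub>R x \<in> T" using cd x c by (simp add: conic_domain_def)
  have oT: "open T" using cd by (simp add: conic_domain_def)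
  have d2: "((\<lambda>r. F (x + r *\<^sub>R w)) has_real_derivative iter_dir_deriv [w] F x) (at (0 / c))"
    using F_deriv0[OF sm x] by simp
  have "((\<lambda>s. F (x + (s / c) *\<^sub>R w)) has_real_derivative iter_dir_deriv [w] F x * (1 / c)) (at 0)"
    by (rule DERIV_chain2[where f="\<lambda>r. F (x + r *\<^sub>R w)" and g="\<lambda>s. s / c", OF d2]) (rule derivative_eq_intros | use c in simp)+
  hence d3: "((\<lambda>s. c * F (x + (s / c) *\<^sub>R w)) has_real_derivative iter_dir_deriv [w] F x) (at 0)"
    using c by (auto dest: DERIV_cmult[where c = c])
  let ?S = "(\<lambda>s. x + (s / c) *\<^sub>R w) -` T"
  have "((\<lambda>s. F (c *\<^sub>R x + s *\<^sub>R w)) has_real_derivative iter_dir_deriv [w] F x) (at 0)"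
  proof (rule has_field_derivative_transform_within_open[OF d3, of ?S])
    show "open ?S" using oT c by (intro open_vimage continuous_intros) auto
    show "0 \<in> ?S" using x by simp
    fix s assume s: "s \<in> ?S"
    have "c *\<^sub>R x + s *\<^sub>R w = c *\<^sub>R (x + (s / c) *\<^sub>R w)" using c by (simp add: algebra_simps)
    then show "c * F (x + (s / c) *\<^sub>R w) = F (c *\<^sub>R x + s *\<^sub>R w)"
      using ph s c by (simp add: pos_homogeneous_def)
  qed
  from DERIV_unique[OF F_deriv0[OF sm cx] this] show ?thesis .
qed

lemma radial0:
  assumes sm: "smooth_on T F" and ph: "pos_homogeneous T F" and cd: "conic_domain T"
    and x: "x \<in> T"
  shows "iter_dir_deriv [x, w] F x = 0"
proof -
  have d1: "((\<lambda>t. iter_dir_deriv [w] F x) has_real_derivative 0) (at 0)" by simp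
  have "((\<lambda>t. iter_dir_deriv [w] F (x + t *\<^sub>R x)) has_real_derivative 0) (at 0)"
  proof (rule has_field_derivative_transform_within_open[OF d1, of "{t. t > -1}"])
    show "open {t::real. t > -1}" by (simp add: open_Collect_less)
    show "0 \<in> {t::real. t > -1}" by simp
    fix t :: real assume "t \<in> {t. t > -1}"
    hence "1 + t > 0" by simp
    moreover have "x + t *\<^sub>R x = (1 + t) *\<^sub>R x" by (simp add: algebra_simps)
    ultimately show "iter_dir_deriv [w] F x = iter_dir_deriv [w] F (x + t *\<^sub>R x)"
      using hom0[OF sm ph cd x] by simp
  qed
  from DERIV_unique[OF sm_D[OF sm x, of "[w]" x] this] show ?thesis .
qed

lemma ft:
  assumes sm: "smooth_on T F" and oT: "open T" and x: "x \<in> T"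
  shows "fundamental_tensor F x u w =
     iter_dir_deriv [u] F x * iter_dir_deriv [w] F x + F x * iter_dir_deriv [u, w] F x"
proof -
  let ?S = "(\<lambda>t. x + t *\<^sub>R u) -` T"
  have oS: "open ?S" using oT by (intro open_vimage continuous_intros)
  have inner: "deriv (\<lambda>s. (F (x + t *\<^sub>R u + s *\<^sub>R w))\<^sup>2) 0 =
      2 * F (x + t *\<^sub>R u) * iter_dir_deriv [w] F (x + t *\<^sub>R u)" if t: "t \<in> ?S" for t
  proof -
    have "((\<lambda>s. F (x + t *\<^sub>R u + s *\<^sub>R w)) has_real_derivative iter_dir_deriv [w] F (x + t *\<^sub>R u)) (at 0)"
      using F_deriv0[OF sm] t by simp
    from DERIV_power[OF this, of 2]
    have "((\<lambda>s. (F (x + t *\<^sub>R u + s *\<^sub>R w))\<^sup>2) has_real_derivative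
       2 * F (x + t *\<^sub>R u) * iter_dir_deriv [w] F (x + t *\<^sub>R u)) (at 0)" by (simp add: mult_ac)
    then show ?thesis by (rule DERIV_imp_deriv)
  qed
  have d: "((\<lambda>t. 2 * F (x + t *\<^sub>R u) * iter_dir_deriv [w] F (x + t *\<^sub>R u)) has_real_derivative
     2 * (iter_dir_deriv [u] F x * iter_dir_deriv [w] F x + F x * iter_dir_deriv [u, w] F x)) (at 0)"
  proof -
    have a: "((\<lambda>t. F (x + t *\<^sub>R u)) has_real_derivative iter_dir_deriv [u] F x) (at 0)"
      using F_deriv0[OF sm x] .
    have b: "((\<lambda>t. iter_dir_deriv [w] F (x + t *\<^sub>R u)) has_real_derivative iter_dir_deriv [u, w] F x) (at 0)"
      using sm_D[OF sm x] .
    have "((\<lambda>t. 2 * F (x + t *\<^sub>R u) * iter_dir_deriv [w] F (x + t *\<^sub>R u)) has_real_derivative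
      (2 * iter_dir_deriv [u] F x) * iter_dir_deriv [w] F (x + 0 *\<^sub>R u) + iter_dir_deriv [u, w] F x * (2 * F (x + 0 *\<^sub>R u))) (at 0)"
      using DERIV_mult[OF DERIV_cmult[OF a, of 2] b] by simp
    then show ?thesis by (simp add: algebra_simps)
  qed
  have "((\<lambda>t. deriv (\<lambda>s. (F (x + t *\<^sub>R u + s *\<^sub>R w))\<^sup>2) 0) has_real_derivative
     2 * (iter_dir_deriv [u] F x * iter_dir_deriv [w] F x + F x * iter_dir_deriv [u, w] F x)) (at 0)"
    by (rule has_field_derivative_transform_within_open[OF d oS]) (use x inner in auto)
  then show ?thesis unfolding fundamental_tensor_def by (simp add: DERIV_imp_deriv)
qed

lemma approx:
  assumes sm: "smooth_on T F" and oT: "open T" and x: "x \<in> T" and e: "\<epsilon> > 0"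
  shows "\<exists>\<delta>>0. \<forall>h. 0 < h \<and> h < \<delta> \<longrightarrow>
    \<bar>(F (x + h *\<^sub>R u + h *\<^sub>R w) - F (x + h *\<^sub>R u) - F (x + h *\<^sub>R w) + F x)
       - h^2 * iter_dir_deriv [w, u] F x\<bar> \<le> \<epsilon> * h^2"
proof -
  let ?D = "iter_dir_deriv [w, u] F"
  have cD: "continuous_on T ?D" using sm unfolding smooth_on_def by blast
  obtain d1 where d1: "d1 > 0" "\<forall>y\<in>T. dist y x < d1 \<longrightarrow> dist (?D y) (?D x) < \<epsilon>"
    using cD x e unfolding continuous_on_iff by metis
  obtain r where r: "r > 0" "ball x r \<subseteq> T" using oT x open_contains_ball by blast
  define d0 where "d0 = min r d1"
  have d0: "d0 > 0" using r d1 by (simp add: d0_def)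
  define \<delta> where "\<delta> = d0 / (norm u + norm w + 1)"
  have nn: "norm u + norm w + 1 > 0" by (simp add: add_nonneg_pos)
  show ?thesis
  proof (intro exI[of _ \<delta>] conjI allI impI)
    show "\<delta> > 0" using d0 nn by (simp add: \<delta>_def)
    fix h :: real assume h: "0 < h \<and> h < \<delta>"
    have "h * (norm u + norm w + 1) < d0" using h nn by (simp add: \<delta>_def pos_less_divide_eq)
    hence hb: "h * (norm u + norm w) < d0" using h by (simp add: algebra_simps)
    have P: "x + s *\<^sub>R u + t *\<^sub>R w \<in> T \<and> \<bar>?D (x + s *\<^sub>R u + t *\<^sub>R w) - ?D x\<bar> < \<epsilon>"
      if st: "0 \<le> s" "s \<le> h" "0 \<le> t" "t \<le> h" for s t
    proof -
      have "norm (s *\<^sub>R u + t *\<^sub>R w) \<le> norm (s *\<^sub>R u) + norm (t *\<^sub>R w)" by (rule norm_triangle_ineq)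
      also have "\<dots> = s * norm u + t * norm w" using st by simp
      also have "\<dots> \<le> h * norm u + h * norm w" using st by (intro add_mono mult_right_mono) auto
      finally have "norm (s *\<^sub>R u + t *\<^sub>R w) < d0" using hb by (simp add: algebra_simps)
      hence dd: "dist (x + s *\<^sub>R u + t *\<^sub>R w) x < d0" by (simp add: dist_norm add.assoc)
      hence inT: "x + s *\<^sub>R u + t *\<^sub>R w \<in> T" using r by (auto simp: d0_def dist_commute)
      moreover have "dist (?D (x + s *\<^sub>R u + t *\<^sub>R w)) (?D x) < \<epsilon>" using d1 inT dd by (simp add: d0_def)
      ultimately show ?thesis by (simp add: dist_real_def)
    qed
    define g where "g s = F ((x + h *\<^sub>R w) + s *\<^sub>R u) - F (x + s *\<^sub>R u)" for s
    have gd: "DERIV g s :> (iter_dir_deriv [u] F ((x + h *\<^sub>R w) + s *\<^sub>R u) - iter_dir_deriv [u] F (x + s *\<^sub>R u))"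
      if "0 \<le> s" "s \<le> h" for s
    proof -
      have m1: "(x + h *\<^sub>R w) + s *\<^sub>R u \<in> T" using P[of s h] that h by (simp add: add_ac)
      have m2: "x + s *\<^sub>R u \<in> T" using P[of s 0] that h by simp
      show ?thesis unfolding g_def
        using DERIV_diff[OF shift_deriv[OF sm m1, of "[]"] shift_deriv[OF sm m2, of "[]"]] by simp
    qed
    obtain \<xi> where xi: "0 < \<xi>" "\<xi> < h" and
      gm: "g h - g 0 = (h - 0) * (iter_dir_deriv [u] F ((x + h *\<^sub>R w) + \<xi> *\<^sub>R u) - iter_dir_deriv [u] F (x + \<xi> *\<^sub>R u))"
      using MVT2[of 0 h g, OF _ gd] h by auto
    define k where "k t = iter_dir_deriv [u] F ((x + \<xi> *\<^sub>R u) + t *\<^sub>R w)" for t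
    have kd: "DERIV k t :> ?D ((x + \<xi> *\<^sub>R u) + t *\<^sub>R w)" if "0 \<le> t" "t \<le> h" for t
    proof -
      have m: "(x + \<xi> *\<^sub>R u) + t *\<^sub>R w \<in> T" using P[of \<xi> t] that xi by simp
      show ?thesis unfolding k_def using shift_deriv[OF sm m, of "[u]"] by simp
    qed
    obtain \<eta> where eta: "0 < \<eta>" "\<eta> < h" and
      km: "k h - k 0 = (h - 0) * ?D ((x + \<xi> *\<^sub>R u) + \<eta> *\<^sub>R w)"
      using MVT2[of 0 h k, OF _ kd] h by auto
    have kk: "k h - k 0 = iter_dir_deriv [u] F ((x + h *\<^sub>R w) + \<xi> *\<^sub>R u) - iter_dir_deriv [u] F (x + \<xi> *\<^sub>R u)"
      unfolding k_def by (simp add: add_ac)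
    have gg: "g h - g 0 = F (x + h *\<^sub>R u + h *\<^sub>R w) - F (x + h *\<^sub>R u) - F (x + h *\<^sub>R w) + F x"
      unfolding g_def by (simp add: add_ac)
    have Pe: "\<bar>?D ((x + \<xi> *\<^sub>R u) + \<eta> *\<^sub>R w) - ?D x\<bar> < \<epsilon>" using P[of \<xi> \<eta>] xi eta by simp
    have "F (x + h *\<^sub>R u + h *\<^sub>R w) - F (x + h *\<^sub>R u) - F (x + h *\<^sub>R w) + F x = g h - g 0"
      using gg by simp
    also have "\<dots> = h * (k h - k 0)" using gm kk by simp
    also have "\<dots> = h^2 * ?D ((x + \<xi> *\<^sub>R u) + \<eta> *\<^sub>R w)" using km by (simp add: power2_eq_square)
    finally have "F (x + h *\<^sub>R u + h *\<^sub>R w) - F (x + h *\<^sub>R u) - F (x + h *\<^sub>R w) + F x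
       = h^2 * ?D ((x + \<xi> *\<^sub>R u) + \<eta> *\<^sub>R w)" .
    hence "\<bar>(F (x + h *\<^sub>R u + h *\<^sub>R w) - F (x + h *\<^sub>R u) - F (x + h *\<^sub>R w) + F x) - h^2 * ?D x\<bar>
       = h^2 * \<bar>?D ((x + \<xi> *\<^sub>R u) + \<eta> *\<^sub>R w) - ?D x\<bar>"
      by (simp add: abs_mult right_diff_distrib[symmetric])
    also have "\<dots> \<le> h^2 * \<epsilon>" using Pe by (intro mult_left_mono) auto
    finally show "\<bar>(F (x + h *\<^sub>R u + h *\<^sub>R w) - F (x + h *\<^sub>R u) - F (x + h *\<^sub>R w) + F x)
       - h^2 * ?D x\<bar> \<le> \<epsilon> * h^2" by (simp add: mult.commute)
  qed
qed

lemma schwarz: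
  assumes sm: "smooth_on T F" and oT: "open T" and x: "x \<in> T"
  shows "iter_dir_deriv [u, w] F x = iter_dir_deriv [w, u] F x"
proof (rule ccontr)
  let ?a = "iter_dir_deriv [w, u] F x" and ?b = "iter_dir_deriv [u, w] F x"
  assume ne: "?b \<noteq> ?a"
  define \<epsilon> where "\<epsilon> = \<bar>?a - ?b\<bar> / 4"
  have e: "\<epsilon> > 0" using ne by (simp add: \<epsilon>_def)
  obtain d1 where d1: "d1 > 0" "\<forall>h. 0 < h \<and> h < d1 \<longrightarrow>
    \<bar>(F (x + h *\<^sub>R u + h *\<^sub>R w) - F (x + h *\<^sub>R u) - F (x + h *\<^sub>R w) + F x) - h^2 * ?a\<bar> \<le> \<epsilon> * h^2"
    using approx[OF sm oT x e, of u w] by blast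
  obtain d2 where d2: "d2 > 0" "\<forall>h. 0 < h \<and> h < d2 \<longrightarrow>
    \<bar>(F (x + h *\<^sub>R w + h *\<^sub>R u) - F (x + h *\<^sub>R w) - F (x + h *\<^sub>R u) + F x) - h^2 * ?b\<bar> \<le> \<epsilon> * h^2"
    using approx[OF sm oT x e, of w u] by blast
  define h where "h = min d1 d2 / 2"
  have h: "0 < h" "h < d1" "h < d2" using d1 d2 by (auto simp: h_def)
  define \<Delta> where "\<Delta> = F (x + h *\<^sub>R u + h *\<^sub>R w) - F (x + h *\<^sub>R u) - F (x + h *\<^sub>R w) + F x"
  have 1: "\<bar>\<Delta> - h^2 * ?a\<bar> \<le> \<epsilon> * h^2" using d1 h unfolding \<Delta>_def by blast
  have eq1: "x + h *\<^sub>R w + h *\<^sub>R u = x + h *\<^sub>R u + h *\<^sub>R w" by (simp add: add_ac)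
  have eqD: "F (x + h *\<^sub>R w + h *\<^sub>R u) - F (x + h *\<^sub>R w) - F (x + h *\<^sub>R u) + F x = \<Delta>"
    unfolding \<Delta>_def eq1 by simp
  have "\<bar>(F (x + h *\<^sub>R w + h *\<^sub>R u) - F (x + h *\<^sub>R w) - F (x + h *\<^sub>R u) + F x) - h^2 * ?b\<bar> \<le> \<epsilon> * h^2"
    using d2(2) h by blast
  hence 2: "\<bar>\<Delta> - h^2 * ?b\<bar> \<le> \<epsilon> * h^2" by (simp only: eqD)
  have "h^2 * \<bar>?a - ?b\<bar> = \<bar>(\<Delta> - h^2 * ?b) - (\<Delta> - h^2 * ?a)\<bar>"
  proof -
    have "(\<Delta> - h^2 * ?b) - (\<Delta> - h^2 * ?a) = h^2 * (?a - ?b)" by (simp add: algebra_simps)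
    then show ?thesis by (simp add: abs_mult)
  qed
  also have "\<dots> \<le> 2 * \<epsilon> * h^2" using 1 2 by linarith
  finally have "h^2 * \<bar>?a - ?b\<bar> \<le> h^2 * (\<bar>?a - ?b\<bar> / 2)" by (simp add: \<epsilon>_def)
  moreover have "h^2 > 0" using h by simp
  ultimately have "\<bar>?a - ?b\<bar> \<le> \<bar>?a - ?b\<bar> / 2" by (meson mult_le_cancel_left_pos)
  with ne show False by simp
qed

lemma second_neg:
  fixes T :: "'a::euclidean_space set" and F :: "'a \<Rightarrow> real"
  assumes cd: "conic_domain T" and pos: "\<forall>v\<in>T. F v > 0"
    and sm: "smooth_on T F" and ph: "pos_homogeneous T F"
    and eig: "\<forall>v\<in>T. one_pos_eigenvalue (fundamental_tensor F v)" and x: "x \<in> T"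
  shows "iter_dir_deriv [u, u] F x \<le> 0"
proof -
  have oT: "open T" using cd by (simp add: conic_domain_def)
  obtain A where lin: "linear A" and BA: "\<forall>u w. fundamental_tensor F x u w = inner (A u) w"
    and dimP: "dim (span {x. \<exists>c>0. A x = c *\<^sub>R x}) = 1"
    using eig x unfolding one_pos_eigenvalue_def by blast
  let ?D1 = "\<lambda>p. iter_dir_deriv [p] F x" and ?D2 = "\<lambda>p q. iter_dir_deriv [p, q] F x"
  have B: "inner (A p) q = ?D1 p * ?D1 q + F x * ?D2 p q" for p q
    using BA ft[OF sm oT x] by metis
  have sym: "inner (A p) q = inner (A q) p" for p q
    using B[of p q] B[of q p] schwarz[OF sm oT x, of p q] by (simp add: mult_ac)
  have Fx: "F x > 0" using pos x by blast
  have D1x: "?D1 x = F x" using euler[OF sm ph x] .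
  have D2x: "?D2 x q = 0" for q using radial0[OF sm ph cd x] .
  have Qx: "inner (A x) x = (F x)^2" using B[of x x] D1x D2x by (simp add: power2_eq_square)
  hence Qxp: "inner (A x) x > 0" using Fx by simp
  define a where "a = ?D1 u / F x"
  define u' where "u' = u - a *\<^sub>R x"
  have Axu: "inner (A x) u = F x * ?D1 u" using B[of x u] D1x D2x by simp
  have orth: "inner (A x) u' = 0"
    unfolding u'_def using Axu Qx Fx by (simp add: inner_diff_right a_def power2_eq_square)
  have neg: "inner (A u') u' \<le> 0" by (rule neg_on_orth[OF lin sym dimP Qxp orth])
  have Asc: "A (c *\<^sub>R y) = c *\<^sub>R A y" for c y using lin by (simp add: linear_scale)
  have Aadd: "A (y + z) = A y + A z" for y z using lin by (simp add: linear_add)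
  have uu: "u = u' + a *\<^sub>R x" by (simp add: u'_def)
  have "inner (A u) u = inner (A u') u' + a * inner (A u') x + a * inner (A x) u' + a^2 * inner (A x) x"
    by (subst (1 2) uu) (simp add: Aadd Asc inner_add_left inner_add_right power2_eq_square algebra_simps)
  also have "\<dots> = inner (A u') u' + a^2 * (F x)^2" using orth sym[of u' x] Qx by simp
  also have "a^2 * (F x)^2 = (?D1 u)^2" using Fx by (simp add: a_def power_divide)
  finally have "inner (A u) u = inner (A u') u' + (?D1 u)^2" .
  moreover have "inner (A u) u = (?D1 u)^2 + F x * ?D2 u u" using B[of u u] by (simp add: power2_eq_square)
  ultimately have "F x * ?D2 u u \<le> 0" using neg by linarith
  with Fx show ?thesis by (simp add: mult_le_0_iff)
qed



lemma reflect01: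
  fixes f :: "real \<Rightarrow> real"
  assumes "(f has_integral I) {0..1}"
  shows "((\<lambda>t. f (1 - t)) has_integral I) {0..1}"
proof -
  have "(f has_integral I) (cbox 0 1)" using assms by simp
  from has_integral_affinity[OF this, of "-1" 1]
  have "((\<lambda>x. f (- x + 1)) has_integral I) ((\<lambda>x. - x + 1) ` cbox 0 1)" by simp
  moreover have "(\<lambda>x::real. - x + 1) ` cbox 0 1 = {0..1}"
  proof
    show "(\<lambda>x::real. - x + 1) ` cbox 0 1 \<subseteq> {0..1}" by auto
    show "{0..1} \<subseteq> (\<lambda>x::real. - x + 1) ` cbox 0 1"
    proof
      fix x :: real assume "x \<in> {0..1}"
      hence "1 - x \<in> cbox 0 1" by simp
      moreover have "x = - (1 - x) + 1" by simp
      ultimately show "x \<in> (\<lambda>x::real. - x + 1) ` cbox 0 1" by (rule rev_image_eqI)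
    qed
  qed
  ultimately show ?thesis by simp
qed

theorem mainTheorem5:
  fixes T :: "'a::euclidean_space set" and F :: "'a \<Rightarrow> real"
  assumes "conic_domain T" and "convex T"
    and "\<forall>v\<in>T. F v > 0"
    and "smooth_on T F"
    and "pos_homogeneous T F"
    and "\<forall>v\<in>T. one_pos_eigenvalue (fundamental_tensor F v)"
    and "v \<in> T" and "w \<in> T"
  shows "F v + F w \<le> 2 * integral {0..1} (\<lambda>t. F (t *\<^sub>R v + (1 - t) *\<^sub>R w))
       \<and> 2 * integral {0..1} (\<lambda>t. F (t *\<^sub>R v + (1 - t) *\<^sub>R w)) \<le> F (v + w)"
proof -
  note cd = assms(1) and cv = assms(2) and pos = assms(3) and sm = assms(4) and ph = assms(5)
    and eig = assms(6) and v = assms(7) and w = assms(8)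
  define f where "f t = F (w + t *\<^sub>R (v - w))" for t
  have seg: "w + t *\<^sub>R (v - w) \<in> T" if "t \<in> {0..1}" for t
  proof -
    have "(1 - t) *\<^sub>R w + t *\<^sub>R v \<in> T" using cv v w that unfolding convex_alt by simp
    moreover have "(1 - t) *\<^sub>R w + t *\<^sub>R v = w + t *\<^sub>R (v - w)" by (simp add: algebra_simps)
    ultimately show ?thesis by simp
  qed
  have d1: "DERIV f t :> iter_dir_deriv [v - w] F (w + t *\<^sub>R (v - w))" if "t \<in> {0..1}" for t
    unfolding f_def using shift_deriv[OF sm seg[OF that], of "[]"] by simp
  have d2: "DERIV (\<lambda>t. iter_dir_deriv [v - w] F (w + t *\<^sub>R (v - w))) t :>
      iter_dir_deriv [v - w, v - w] F (w + t *\<^sub>R (v - w))" if "t \<in> {0..1}" for t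
    using shift_deriv[OF sm seg[OF that], of "[v - w]"] by simp
  have cc: "concave_on {0..1} f"
    by (rule f''_le0_imp_concave[OF convex_real_interval(5) d1 d2])
       (use second_neg[OF cd pos sm ph eig seg] in auto)
  have f0: "f 0 = F w" and f1: "f 1 = F v" by (simp_all add: f_def)
  have L: "f t + f (1 - t) \<ge> F w + F v" if t: "t \<in> {0..1}" for t
  proof -
    have "f ((1 - t) *\<^sub>R 0 + t *\<^sub>R 1) \<ge> (1 - t) * f 0 + t * f 1"
      using t by (intro concave_onD[OF cc]) auto
    moreover have "f ((1 - (1 - t)) *\<^sub>R 0 + (1 - t) *\<^sub>R 1) \<ge> (1 - (1 - t)) * f 0 + (1 - t) * f 1"
      using t by (intro concave_onD[OF cc]) auto
    ultimately show ?thesis using f0 f1 by (simp add: algebra_simps)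
  qed
  have vw: "v + w \<in> T" and half: "f (1/2) = F (v + w) / 2"
  proof -
    have m: "w + (1/2) *\<^sub>R (v - w) \<in> T" using seg[of "1/2"] by simp
    have e: "(2::real) *\<^sub>R (w + (1/2) *\<^sub>R (v - w)) = v + w" by (simp add: algebra_simps scaleR_2)
    show "v + w \<in> T" using cd m e unfolding conic_domain_def by (metis zero_less_numeral)
    have "F (v + w) = 2 * F (w + (1/2) *\<^sub>R (v - w))" using ph m e unfolding pos_homogeneous_def
      by (metis zero_less_numeral)
    then show "f (1/2) = F (v + w) / 2" by (simp add: f_def)
  qed
  have U: "f t + f (1 - t) \<le> F (v + w)" if t: "t \<in> {0..1}" for t
  proof -
    have A: "f ((1 - 1/2) *\<^sub>R t + (1/2) *\<^sub>R (1 - t)) \<ge> (1 - 1/2) * f t + (1/2) * f (1 - t)"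
      using t by (intro concave_onD[OF cc]) auto
    have E: "(1 - 1/2) *\<^sub>R t + (1/2) *\<^sub>R (1 - t) = (1/2 :: real)" by (simp add: field_simps)
    from A have "f (1/2) \<ge> (1 - 1/2) * f t + (1/2) * f (1 - t)" by (simp only: E)
    then show ?thesis using half by simp
  qed
  have cf: "continuous_on {0..1} f"
    by (rule DERIV_continuous_on[OF has_field_derivative_at_within[OF d1]])
  have If: "(f has_integral integral {0..1} f) {0..1}"
    using integrable_continuous_interval[OF cf] by (simp add: has_integral_integral)
  have Ir: "((\<lambda>t. f (1 - t)) has_integral integral {0..1} f) {0..1}" by (rule reflect01[OF If])
  have Isum: "((\<lambda>t. f t + f (1 - t)) has_integral 2 * integral {0..1} f) {0..1}"
    using has_integral_add[OF If Ir] by simp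
  have eqf: "(\<lambda>t. F (t *\<^sub>R v + (1 - t) *\<^sub>R w)) = f"
    by (rule ext) (simp add: f_def algebra_simps)
  have c1: "((\<lambda>t. F w + F v) has_integral (F w + F v)) {0..1::real}"
    using has_integral_const_real[of "F w + F v" 0 1] by simp
  have c2: "((\<lambda>t. F (v + w)) has_integral F (v + w)) {0..1::real}"
    using has_integral_const_real[of "F (v + w)" 0 1] by simp
  have lo: "F w + F v \<le> 2 * integral {0..1} f"
    by (rule has_integral_le[OF c1 Isum]) (use L in auto)
  have hi: "2 * integral {0..1} f \<le> F (v + w)"
    by (rule has_integral_le[OF Isum c2]) (use U in auto)
  show ?thesis unfolding eqf using lo hi by simp
qed

end
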